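(* Let $A$ be a finite nonempty set, $M\subseteq A^A$, and let $\emptyset\ne B\subsetneq A$ be invariant under $M$ (i.e., $g(B)\subseteq B$ for all $g\in M$). Then $\mathrm{gQuord}_B(M\restriction_B)=(\mathrm{gQuord}_A M)\restriction_B$.
   Context: $M\restriction_B:=\{g\restriction_B\mid g\in M\}\subseteq B^B$; for a relation $\rho\subseteq A^m$, $\rho\restriction_B:=\rho\cap B^m$, and for a set $Q$ of relations, $Q\restriction_B:=\{\rho\restriction_B\mid\rho\in Q\}$. A relation $\rho\subseteq X^m$ is a generalized quasiorder on $X$ if it is reflexive ($(x,\dots,x)\in\rho$ for all $x\in X$) and for every $m\times m$-matrix over $X$ whose rows and columns all lie in $\rho$, its diagonal lies in $\rho$. $\mathrm{gQuord}_X N$ is the set of all generalized quasiorders on $X$ preserved by every $h\in N\subseteq X^X$ (i.e., $h$ maps tuples of $\rho$ componentwise into $\rho$). *)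

theory Defs
  imports "HOL-Library.FuncSet"
begin

definition tuples :: "'a set \<Rightarrow> nat \<Rightarrow> 'a list set" where
  "tuples X m = {xs. length xs = m \<and> set xs \<subseteq> X}"

definition reflexive_rel :: "'a set \<Rightarrow> nat \<Rightarrow> 'a list set \<Rightarrow> bool" where
  "reflexive_rel X m \<rho> \<longleftrightarrow> (\<forall>x\<in>X. replicate m x \<in> \<rho>)"

definition matrix_closed :: "nat \<Rightarrow> 'a list set \<Rightarrow> bool" where
  "matrix_closed m \<rho> \<longleftrightarrow>
     (\<forall>r :: nat \<Rightarrow> nat \<Rightarrow> 'a.
        (\<forall>i<m. map (\<lambda>j. r i j) [0..<m] \<in> \<rho>) \<longrightarrow>
        (\<forall>j<m. map (\<lambda>i. r i j) [0..<m] \<in> \<rho>) \<longrightarrow>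
        map (\<lambda>i. r i i) [0..<m] \<in> \<rho>)"

definition gen_quasiorder :: "'a set \<Rightarrow> nat \<Rightarrow> 'a list set \<Rightarrow> bool" where
  "gen_quasiorder X m \<rho> \<longleftrightarrow>
     \<rho> \<subseteq> tuples X m \<and> reflexive_rel X m \<rho> \<and> matrix_closed m \<rho>"

definition preserves :: "('a \<Rightarrow> 'a) \<Rightarrow> 'a list set \<Rightarrow> bool" where
  "preserves h \<rho> \<longleftrightarrow> (\<forall>xs\<in>\<rho>. map h xs \<in> \<rho>)"

definition gQuord :: "'a set \<Rightarrow> ('a \<Rightarrow> 'a) set \<Rightarrow> 'a list set set" where
  "gQuord X N = {\<rho>. (\<exists>m\<ge>1. gen_quasiorder X m \<rho>) \<and> (\<forall>h\<in>N. preserves h \<rho>)}"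

definition restrict_funs :: "('a \<Rightarrow> 'a) set \<Rightarrow> 'a set \<Rightarrow> ('a \<Rightarrow> 'a) set" where
  "restrict_funs M B = (\<lambda>g. restrict g B) ` M"

definition restrict_rel :: "'a list set \<Rightarrow> 'a set \<Rightarrow> 'a list set" where
  "restrict_rel \<rho> B = \<rho> \<inter> lists B"

definition restrict_rels :: "'a list set set \<Rightarrow> 'a set \<Rightarrow> 'a list set set" where
  "restrict_rels Q B = (\<lambda>\<rho>. restrict_rel \<rho> B) ` Q"

end

theory Submission
  imports Defs
begin

lemma map_upt_eq_replicate:
  "(map f [0..<m] = replicate m a) \<longleftrightarrow> (\<forall>k<m. f k = a)"
  by (auto simp: list_eq_iff_nth_eq)

lemma restr_in:
  assumes B: "B \<subseteq> A" and inv: "\<forall>g\<in>M. g ` B \<subseteq> B"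
    and rho: "\<rho> \<in> gQuord A M"
  shows "restrict_rel \<rho> B \<in> gQuord B (restrict_funs M B)"
proof -
  obtain m where m: "m \<ge> 1" "gen_quasiorder A m \<rho>" and pr: "\<forall>h\<in>M. preserves h \<rho>"
    using rho unfolding gQuord_def by auto
  have "gen_quasiorder B m (restrict_rel \<rho> B)"
    using m B unfolding gen_quasiorder_def tuples_def reflexive_rel_def matrix_closed_def restrict_rel_def
    by (auto simp: in_lists_conv_set)
  moreover have "\<forall>h\<in>restrict_funs M B. preserves h (restrict_rel \<rho> B)"
  proof
    fix h assume "h \<in> restrict_funs M B"
    then obtain g where g: "g \<in> M" "h = restrict g B" unfolding restrict_funs_def by auto
    show "preserves h (restrict_rel \<rho> B)"
      unfolding preserves_def restrict_rel_def
    proof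
      fix xs assume xs: "xs \<in> \<rho> \<inter> lists B"
      then have "map h xs = map g xs" using g by (auto simp: in_lists_conv_set)
      moreover have "map g xs \<in> \<rho>" using pr g xs unfolding preserves_def by auto
      moreover have "map g xs \<in> lists B" using inv g xs by (auto simp: in_lists_conv_set)
      ultimately show "map h xs \<in> \<rho> \<inter> lists B" by (metis IntI)
    qed
  qed
  ultimately show ?thesis using m unfolding gQuord_def by auto
qed

lemma ext_in:
  assumes B: "B \<subseteq> A" and MA: "M \<subseteq> A \<rightarrow>\<^sub>E A"
    and sig: "\<sigma> \<in> gQuord B (restrict_funs M B)"
  shows "\<sigma> \<in> restrict_rels (gQuord A M) B"
proof -
  obtain m where m: "m \<ge> 1" "gen_quasiorder B m \<sigma>"
    and pr: "\<forall>h\<in>restrict_funs M B. preserves h \<sigma>"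
    using sig unfolding gQuord_def by auto
  have st: "\<sigma> \<subseteq> tuples B m" and refl: "\<forall>x\<in>B. replicate m x \<in> \<sigma>"
    and mc: "matrix_closed m \<sigma>"
    using m(2) unfolding gen_quasiorder_def reflexive_rel_def by auto
  define \<rho> where "\<rho> = \<sigma> \<union> (\<lambda>x. replicate m x) ` A"
  have "gen_quasiorder A m \<rho>"
    unfolding gen_quasiorder_def
  proof (intro conjI)
    show "\<rho> \<subseteq> tuples A m" using st B unfolding \<rho>_def tuples_def by fastforce
    show "reflexive_rel A m \<rho>" unfolding reflexive_rel_def \<rho>_def by auto
    show "matrix_closed m \<rho>" unfolding matrix_closed_def
    proof (intro allI impI)
      fix r :: "nat \<Rightarrow> nat \<Rightarrow> 'a"
      assume rows: "\<forall>i<m. map (r i) [0..<m] \<in> \<rho>"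
        and cols: "\<forall>j<m. map (\<lambda>i. r i j) [0..<m] \<in> \<rho>"
      show "map (\<lambda>i. r i i) [0..<m] \<in> \<rho>"
      proof (cases "\<forall>i<m. \<forall>j<m. r i j \<in> B")
        case True
        have rs: "map (r i) [0..<m] \<in> \<sigma>" if "i < m" for i
        proof -
          have "map (r i) [0..<m] \<in> \<rho>" using rows that by auto
          moreover have "r i 0 \<in> B" using True that by auto
          moreover {
            fix x assume x: "map (r i) [0..<m] = replicate m x"
            then have "r i 0 = x" using that unfolding map_upt_eq_replicate by auto
            then have "map (r i) [0..<m] \<in> \<sigma>" using x refl \<open>r i 0 \<in> B\<close> by simp }
          ultimately show ?thesis unfolding \<rho>_def by blast
        qed
        have cs: "map (\<lambda>i. r i j) [0..<m] \<in> \<sigma>" if "j < m" for j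
        proof -
          have "map (\<lambda>i. r i j) [0..<m] \<in> \<rho>" using cols that by auto
          moreover have "r 0 j \<in> B" using True that by auto
          moreover {
            fix x assume x: "map (\<lambda>i. r i j) [0..<m] = replicate m x"
            then have "r 0 j = x" using that unfolding map_upt_eq_replicate by auto
            then have "map (\<lambda>i. r i j) [0..<m] \<in> \<sigma>" using x refl \<open>r 0 j \<in> B\<close> by simp }
          ultimately show ?thesis unfolding \<rho>_def by blast
        qed
        have "map (\<lambda>i. r i i) [0..<m] \<in> \<sigma>" using mc rs cs unfolding matrix_closed_def by blast
        then show ?thesis unfolding \<rho>_def by auto
      next
        case False
        then obtain i j where ij: "i < m" "j < m" "r i j \<notin> B" by auto
        have "r i j \<in> set (map (r i) [0..<m])" using ij by auto
        then have "map (r i) [0..<m] \<notin> \<sigma>" using st ij unfolding tuples_def by blast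
        then obtain a where a: "a \<in> A" "\<forall>k<m. r i k = a"
          using rows ij unfolding \<rho>_def by (auto simp: map_upt_eq_replicate)
        have aB: "a \<notin> B" using a ij by auto
        have diag: "r k k = a" if km: "k < m" for k
        proof -
          have "r i k \<in> set (map (\<lambda>i. r i k) [0..<m])" using ij by auto
          moreover have "r i k \<notin> B" using a aB that by auto
          ultimately have "map (\<lambda>i. r i k) [0..<m] \<notin> \<sigma>" using st unfolding tuples_def by blast
          then obtain b where "\<forall>l<m. r l k = b"
          proof -
            have "map (\<lambda>i. r i k) [0..<m] \<in> \<rho>" using cols km by blast
            then obtain b where "map (\<lambda>i. r i k) [0..<m] = replicate m b"
              using \<open>map (\<lambda>i. r i k) [0..<m] \<notin> \<sigma>\<close> unfolding \<rho>_def by blast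
            then show ?thesis using that unfolding map_upt_eq_replicate by blast
          qed
          then show ?thesis using a ij km by metis
        qed
        have "map (\<lambda>i. r i i) [0..<m] = replicate m a" using diag by (simp add: map_upt_eq_replicate)
        then show ?thesis unfolding \<rho>_def using a by auto
      qed
    qed
  qed
  moreover have "\<forall>g\<in>M. preserves g \<rho>"
  proof
    fix g assume g: "g \<in> M"
    then have gA: "\<forall>x\<in>A. g x \<in> A" using MA by auto
    have prg: "preserves (restrict g B) \<sigma>" using pr g unfolding restrict_funs_def by auto
    show "preserves g \<rho>" unfolding preserves_def
    proof
      fix xs assume "xs \<in> \<rho>"
      then consider "xs \<in> \<sigma>" | x where "x \<in> A" "xs = replicate m x" unfolding \<rho>_def by auto
      then show "map g xs \<in> \<rho>"
      proof cases
        case 1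
        then have "set xs \<subseteq> B" using st unfolding tuples_def by auto
        then have "map g xs = map (restrict g B) xs" by (intro map_cong) (auto simp: restrict_def)
        moreover have "map (restrict g B) xs \<in> \<sigma>" using prg 1 unfolding preserves_def by blast
        ultimately show ?thesis unfolding \<rho>_def by (metis UnI1)
      next
        case 2
        then show ?thesis using gA unfolding \<rho>_def by auto
      qed
    qed
  qed
  ultimately have "\<rho> \<in> gQuord A M" using m unfolding gQuord_def by auto
  moreover have "restrict_rel \<rho> B = \<sigma>"
  proof -
    have "\<sigma> \<subseteq> lists B" using st unfolding tuples_def by auto
    moreover have "replicate m x \<in> \<sigma>" if "x \<in> A" "replicate m x \<in> lists B" for x
      using that m(1) refl by (cases m) auto
    ultimately show ?thesis unfolding restrict_rel_def \<rho>_def by auto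
  qed
  ultimately show ?thesis unfolding restrict_rels_def by force
qed

theorem proposition4p8:
  fixes A B :: "'a set" and M :: "('a \<Rightarrow> 'a) set"
  assumes "finite A" and "A \<noteq> {}"
    and "M \<subseteq> A \<rightarrow>\<^sub>E A"
    and "B \<noteq> {}" and "B \<subset> A"
    and "\<forall>g\<in>M. g ` B \<subseteq> B"
  shows "gQuord B (restrict_funs M B) = restrict_rels (gQuord A M) B"
proof
  show "gQuord B (restrict_funs M B) \<subseteq> restrict_rels (gQuord A M) B"
    using ext_in[of B A M] assms by auto
  show "restrict_rels (gQuord A M) B \<subseteq> gQuord B (restrict_funs M B)"
    using restr_in[of B A M] assms unfolding restrict_rels_def by auto
qed

end
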